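(* In the changepoint model of the context, for $0<j\le i\le n$, $$o_{ji}=\frac{\int\prod_{\ell=j}^{i}p(Y_\ell=y_\ell\mid X_\ell=x)\,\mathcal J(dx)}{\int\prod_{\ell=j}^{i-1}p(Y_\ell=y_\ell\mid X_\ell=x)\,\mathcal J(dx)},\qquad H_{ji}(dx)=\frac{\prod_{\ell=j}^{i}p(Y_\ell=y_\ell\mid X_\ell=x)\,\mathcal J(dx)}{\int\prod_{\ell=j}^{i}p(Y_\ell=y_\ell\mid X_\ell=x)\,\mathcal J(dx)}$$ (an empty product being $1$), and $o_{0i}=o_{1i}$ for $0<i\le n$.
   Context: Model: Let $n\ge 1$ and fix observed data $y_1,\dots,y_n$. Let $(\mathbb X,\mathcal X)$, $(\mathbb Y,\mathcal Y)$ be standard Borel spaces, $\psi$ a $\sigma$-finite measure on $(\mathbb Y,\mathcal Y)$, $\mathcal J$ a probability measure on $(\mathbb X,\mathcal X)$, and $q_{ji}\in[0,1]$ for $0\le j<i\le n$. The model consists of random variables $C_i\in\{0,\dots,i\}$, $X_i\in\mathbb X$, $Y_i\in\mathbb Y$, $i=1,\dots,n$, with joint law factorizing as: $P(C_1=0)=q_{01}$, $P(C_1=1)=1-q_{01}$; for $i\ge2$, $C_i$ depends on the past only through $C_{i-1}$, with $P(C_i=j\mid C_{i-1}=j)=q_{ji}$ and $P(C_i=i\mid C_{i-1}=j)=1-q_{ji}$ ($0\le j\le i-1$); $X_1\sim\mathcal J$ independent of $C_1$; for $i\ge 2$, $X_i$ depends on the past only through $(C_i,X_{i-1})$, with $X_i\sim\mathcal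 J$ if $C_i=i$ and $X_i=X_{i-1}$ if $C_i<i$; $Y_i$ depends on all other variables only through $X_i$, with density $p(Y_i=y\mid X_i=x)$ w.r.t. $\psi$. Assume $\int\prod_{\ell=j}^i p(Y_\ell=y_\ell\mid X_\ell=x)\,\mathcal J(dx)>0$ for all $0<j\le i\le n$. $Y_{a:b}=y_{a:b}$ abbreviates $Y_a=y_a,\dots,Y_b=y_b$. Notation: $H_{ji}=P(X_i\in\cdot\mid C_i=j,Y_{1:i}=y_{1:i})$; $o_{ji}$ is the density $P(Y_i\in dy_i\mid C_i=j,Y_{j:i-1}=y_{j:i-1})/\psi(dy_i)$ evaluated at $y_i$ (for $j=0$ the conditioning is on $Y_{1:i-1}=y_{1:i-1}$, for $j=i$ only on $C_i=i$). *)

theory Defs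
  imports "HOL-Probability.Probability"
begin

text \<open>Changepoint model. Time indices are 1..n. A changepoint path is a function
  c with c l = C_l for l in {1..n}.\<close>

definition init_prob :: "(nat \<Rightarrow> nat \<Rightarrow> real) \<Rightarrow> nat \<Rightarrow> real" where
  "init_prob q b = (if b = 0 then q 0 1 else if b = 1 then 1 - q 0 1 else 0)"

text \<open>P(C_l = b | C_{l-1} = a), for l >= 2.\<close>
definition trans_prob :: "(nat \<Rightarrow> nat \<Rightarrow> real) \<Rightarrow> nat \<Rightarrow> nat \<Rightarrow> nat \<Rightarrow> real" where
  "trans_prob q l a b = (if b = a then q a l else if b = l then 1 - q a l else 0)"

definition path_prob :: "nat \<Rightarrow> (nat \<Rightarrow> nat \<Rightarrow> real) \<Rightarrow> (nat \<Rightarrow> nat) \<Rightarrow> real" where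
  "path_prob n q c = init_prob q (c 1) * (\<Prod>l\<in>{2..n}. trans_prob q l (c (l - 1)) (c l))"

definition cp_paths :: "nat \<Rightarrow> (nat \<Rightarrow> nat) set" where
  "cp_paths n = {1..n} \<rightarrow>\<^sub>E {0..n}"

text \<open>Given the path c and i.i.d. J-draws xi_1..xi_n, the X process:
  X_1 = xi_1; X_l = xi_l if C_l = l, otherwise X_l = X_{l-1}.\<close>
fun seg_val :: "(nat \<Rightarrow> nat) \<Rightarrow> (nat \<Rightarrow> 'x) \<Rightarrow> nat \<Rightarrow> 'x" where
  "seg_val c \<xi> 0 = \<xi> 0"
| "seg_val c \<xi> (Suc l) =
     (if l = 0 then \<xi> 1 else if c (Suc l) = Suc l then \<xi> (Suc l) else seg_val c \<xi> l)"

definition prob_C :: "nat \<Rightarrow> (nat \<Rightarrow> nat \<Rightarrow> real) \<Rightarrow> nat \<Rightarrow> nat \<Rightarrow> real" where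
  "prob_C n q i j = (\<Sum>c\<in>cp_paths n. if c i = j then path_prob n q c else 0)"

text \<open>Canonical version of the density (w.r.t. psi on the observed coordinates S)
  of the measure  B \<mapsto> P(C_i = j, X_i \<in> A, Y_S \<in> B), evaluated at y_S:
  obtained from the joint law of (C,X) and the observation densities p,
  the unobserved Y's being integrated out.\<close>
definition joint_dens ::
  "nat \<Rightarrow> (nat \<Rightarrow> nat \<Rightarrow> real) \<Rightarrow> 'x measure \<Rightarrow> ('x \<Rightarrow> 'y \<Rightarrow> real) \<Rightarrow> (nat \<Rightarrow> 'y)
    \<Rightarrow> nat set \<Rightarrow> nat \<Rightarrow> nat \<Rightarrow> 'x set \<Rightarrow> real" where
  "joint_dens n q J p y S i j A =
     (\<Sum>c\<in>cp_paths n. path_prob n q c *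
        (\<integral>\<xi>. (if c i = j \<and> seg_val c \<xi> i \<in> A
               then (\<Prod>l\<in>S. p (seg_val c \<xi> l) (y l)) else 0) \<partial>(PiM {1..n} (\<lambda>_. J))))"

text \<open>o_{ji}: density of P(Y_i \<in> dy_i | C_i = j, Y_{j:i-1} = y_{j:i-1}) at y_i
  (for j = 0 conditioning on Y_{1:i-1}, for j = i only on C_i = i).\<close>
definition o_fun ::
  "nat \<Rightarrow> (nat \<Rightarrow> nat \<Rightarrow> real) \<Rightarrow> 'x measure \<Rightarrow> ('x \<Rightarrow> 'y \<Rightarrow> real) \<Rightarrow> (nat \<Rightarrow> 'y)
    \<Rightarrow> nat \<Rightarrow> nat \<Rightarrow> real" where
  "o_fun n q J p y j i =
     joint_dens n q J p y {max j 1..i} i j UNIV / joint_dens n q J p y {max j 1..<i} i j UNIV"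

text \<open>H_{ji} = P(X_i \<in> . | C_i = j, Y_{1:i} = y_{1:i}).\<close>
definition H_fun ::
  "nat \<Rightarrow> (nat \<Rightarrow> nat \<Rightarrow> real) \<Rightarrow> 'x measure \<Rightarrow> ('x \<Rightarrow> 'y \<Rightarrow> real) \<Rightarrow> (nat \<Rightarrow> 'y)
    \<Rightarrow> nat \<Rightarrow> nat \<Rightarrow> 'x measure" where
  "H_fun n q J p y j i = measure_of (space J) (sets J)
     (\<lambda>A. ennreal (joint_dens n q J p y {1..i} i j A / joint_dens n q J p y {1..i} i j UNIV))"

end

theory Submission
  imports Defs
begin

locale cpm =
  fixes n :: nat and q :: "nat \<Rightarrow> nat \<Rightarrow> real" and J :: "'x::polish_space measure"
    and p :: "'x \<Rightarrow> 'y \<Rightarrow> real" and y :: "nat \<Rightarrow> 'y"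
  assumes n1: "n \<ge> 1" and PJ: "prob_space J" and sJ: "sets J = sets borel"
    and qb: "\<forall>j i. j < i \<and> i \<le> n \<longrightarrow> 0 \<le> q j i \<and> q j i \<le> 1"
    and pm: "\<And>v. (\<lambda>x. p x v) \<in> borel_measurable J"
    and pnn: "\<And>x v. 0 \<le> p x v"
    and ipos: "\<forall>j i. 0 < j \<and> j \<le> i \<and> i \<le> n \<longrightarrow> (\<integral>x. (\<Prod>l\<in>{j..i}. p x (y l)) \<partial>J) > 0"
begin

definition cons :: "(nat \<Rightarrow> nat) \<Rightarrow> bool" where
  "cons c \<longleftrightarrow> c 1 \<le> 1 \<and> (\<forall>l\<in>{2..n}. c l = c (l - 1) \<or> c l = l)"

definition PP :: "(nat \<Rightarrow> nat) \<Rightarrow> nat set \<Rightarrow> (nat \<Rightarrow> 'x) \<Rightarrow> real" where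
  "PP c T \<xi> = (\<Prod>l\<in>T. p (\<xi> (max (c l) 1)) (y l))"

lemma cons_le: "cons c \<Longrightarrow> l \<in> {1..n} \<Longrightarrow> c l \<le> l"
proof (induction l)
  case 0 then show ?case by simp
next
  case (Suc l)
  show ?case
  proof (cases "l = 0")
    case True then show ?thesis using Suc.prems by (simp add: cons_def)
  next
    case False
    then have "Suc l \<in> {2..n}" using Suc.prems by auto
    then have "c (Suc l) = c (Suc l - 1) \<or> c (Suc l) = Suc l" using Suc.prems unfolding cons_def by blast
    then show ?thesis using Suc False by auto
  qed
qed

lemma path_cons: assumes "path_prob n q c \<noteq> 0" shows "cons c"
proof -
  have "init_prob q (c 1) \<noteq> 0" and pr: "(\<Prod>l\<in>{2..n}. trans_prob q l (c (l - 1)) (c l)) \<noteq> 0"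
    using assms by (auto simp: path_prob_def)
  then have "c 1 \<le> 1" by (auto simp: init_prob_def split: if_splits)
  moreover have "\<forall>l\<in>{2..n}. c l = c (l - 1) \<or> c l = l"
  proof
    fix l assume "l \<in> {2..n}"
    then have "trans_prob q l (c (l - 1)) (c l) \<noteq> 0" using pr by (metis finite_atLeastAtMost prod_zero_iff)
    then show "c l = c (l - 1) \<or> c l = l" by (auto simp: trans_prob_def split: if_splits)
  qed
  ultimately show ?thesis by (simp add: cons_def)
qed

lemma path_nonneg: "0 \<le> path_prob n q c"
proof (cases "path_prob n q c = 0")
  case False
  then have c: "cons c" by (rule path_cons)
  have "0 \<le> init_prob q (c 1)" using qb n1 by (auto simp: init_prob_def)
  moreover have "0 \<le> trans_prob q l (c (l - 1)) (c l)" if "l \<in> {2..n}" for l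
  proof -
    have "l - 1 \<in> {1..n}" using that by auto
    then have "c (l - 1) \<le> l - 1" using cons_le[OF c, of "l - 1"] by blast
    then have "c (l - 1) < l" "l \<le> n" using that by auto
    then show ?thesis using qb by (auto simp: trans_prob_def)
  qed
  ultimately show ?thesis unfolding path_prob_def by (intro mult_nonneg_nonneg prod_nonneg) auto
qed simp

lemma seg_closed: "cons c \<Longrightarrow> l \<in> {1..n} \<Longrightarrow> seg_val c \<xi> l = \<xi> (max (c l) 1)"
proof (induction l)
  case 0 then show ?case by simp
next
  case (Suc l)
  show ?case
  proof (cases "l = 0")
    case True then show ?thesis using Suc.prems by (auto simp: cons_def max_def)
  next
    case False
    then have "Suc l \<in> {2..n}" using Suc.prems by auto
    then have "c (Suc l) = c (Suc l - 1) \<or> c (Suc l) = Suc l" using Suc.prems unfolding cons_def by blast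
    then show ?thesis using Suc False by auto
  qed
qed

lemma seg_const: assumes c: "cons c" and m: "m \<le> n" and l: "l \<in> {max (c m) 1..m}"
  shows "c l = c m"
proof -
  have "\<forall>k. k \<le> m - max (c m) 1 \<longrightarrow> c (m - k) = c m"
  proof
    fix k show "k \<le> m - max (c m) 1 \<longrightarrow> c (m - k) = c m"
    proof (induction k)
      case 0 then show ?case by simp
    next
      case (Suc k)
      show ?case
      proof
        assume a: "Suc k \<le> m - max (c m) 1"
        then have e: "c (m - k) = c m" using Suc by auto
        have "m - k \<in> {2..n}" using a m by auto
        then have "c (m - k) = c (m - k - 1) \<or> c (m - k) = m - k" using c unfolding cons_def by blast
        moreover have "c (m - k) \<noteq> m - k" using e a by auto
        moreover have "m - Suc k = m - k - 1" by simp
        ultimately show "c (m - Suc k) = c m" using e by metis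
      qed
    qed
  qed
  note * = this[rule_format, of "m - l"]
  have "m - l \<le> m - max (c m) 1" "m - (m - l) = l" using l by auto
  then show ?thesis using * by simp
qed


abbreviation PI :: "(nat \<Rightarrow> 'x) measure" where "PI \<equiv> PiM {1..n} (\<lambda>_. J)"

lemma spJ: "space J = UNIV"
  using sets_eq_imp_space_eq[OF sJ] by simp

lemma PP_meas: assumes "\<forall>l\<in>T. max (c l) 1 \<in> I"
  shows "PP c T \<in> borel_measurable (PiM I (\<lambda>_. J))"
  unfolding PP_def[abs_def]
proof (rule borel_measurable_prod)
  fix l assume "l \<in> T"
  then have "max (c l) 1 \<in> I" using assms by auto
  then show "(\<lambda>\<xi>. p (\<xi> (max (c l) 1)) (y l)) \<in> borel_measurable (PiM I (\<lambda>_. J))"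
    by (rule measurable_compose[OF measurable_component_singleton[of "max (c l) 1" I "\<lambda>_. J"] pm])
qed

lemma PP_nonneg: "0 \<le> PP c T \<xi>"
  unfolding PP_def by (intro prod_nonneg) (auto intro: pnn)

lemma nnprod:
  fixes G :: "(nat \<Rightarrow> 'x) \<Rightarrow> ennreal" and H :: "'x \<Rightarrow> ennreal"
  assumes s: "s \<in> {1..n}" and G1: "G \<in> borel_measurable PI"
    and G2: "G \<in> borel_measurable (PiM ({1..n} - {s}) (\<lambda>_. J))"
    and H: "H \<in> borel_measurable J" and inv: "\<And>\<xi> v. G (\<xi>(s := v)) = G \<xi>"
  shows "(\<integral>\<^sup>+\<xi>. G \<xi> * H (\<xi> s) \<partial>PI) = (\<integral>\<^sup>+\<xi>. G \<xi> \<partial>PI) * (\<integral>\<^sup>+x. H x \<partial>J)"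
proof -
  interpret P: product_sigma_finite "\<lambda>_::nat. J"
    by (simp add: product_sigma_finite_def prob_space_imp_sigma_finite PJ)
  interpret J: prob_space J by (rule PJ)
  define I' where "I' = {1..n} - {s}"
  have ins: "{1..n} = insert s I'" using s by (auto simp: I'_def)
  have fI: "finite I'" "s \<notin> I'" by (auto simp: I'_def)
  have m1: "(\<lambda>\<xi>. G \<xi> * H (\<xi> s)) \<in> borel_measurable (PiM (insert s I') (\<lambda>_. J))"
  proof -
    have "(\<lambda>\<xi>. H (\<xi> s)) \<in> borel_measurable (PiM (insert s I') (\<lambda>_. J))"
      by (rule measurable_compose[OF measurable_component_singleton[of s "insert s I'" "\<lambda>_. J"] H]) simp
    then show ?thesis using G1 unfolding ins by measurable
  qed
  have "(\<integral>\<^sup>+\<xi>. G \<xi> * H (\<xi> s) \<partial>PI)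
      = (\<integral>\<^sup>+x. (\<integral>\<^sup>+v. G (x(s := v)) * H ((x(s := v)) s) \<partial>J) \<partial>PiM I' (\<lambda>_. J))"
    unfolding ins by (rule P.product_nn_integral_insert[OF fI m1])
  also have "\<dots> = (\<integral>\<^sup>+x. G x * (\<integral>\<^sup>+v. H v \<partial>J) \<partial>PiM I' (\<lambda>_. J))"
    by (simp add: inv nn_integral_cmult H)
  also have "\<dots> = (\<integral>\<^sup>+x. G x \<partial>PiM I' (\<lambda>_. J)) * (\<integral>\<^sup>+v. H v \<partial>J)"
    using G2 unfolding I'_def by (rule nn_integral_multc)
  finally have L: "(\<integral>\<^sup>+\<xi>. G \<xi> * H (\<xi> s) \<partial>PI) = (\<integral>\<^sup>+x. G x \<partial>PiM I' (\<lambda>_. J)) * (\<integral>\<^sup>+v. H v \<partial>J)" .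
  have G1': "G \<in> borel_measurable (PiM (insert s I') (\<lambda>_. J))" using G1 unfolding ins .
  have "(\<integral>\<^sup>+\<xi>. G \<xi> \<partial>PI) = (\<integral>\<^sup>+x. (\<integral>\<^sup>+v. G (x(s := v)) \<partial>J) \<partial>PiM I' (\<lambda>_. J))"
    unfolding ins by (rule P.product_nn_integral_insert[OF fI G1'])
  also have "\<dots> = (\<integral>\<^sup>+x. G x \<partial>PiM I' (\<lambda>_. J))"
    by (simp add: inv J.emeasure_space_1)
  finally show ?thesis using L by simp
qed

lemma fact:
  assumes c: "cons c" and m: "1 \<le> m" "m \<le> n" and S: "S \<subseteq> {1..m}" and A: "A \<in> sets J"
  shows "(\<integral>\<xi>. indicator A (\<xi> (max (c m) 1)) * PP c S \<xi> \<partial>PI)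
    = (\<integral>\<xi>. PP c (S \<inter> {1..<max (c m) 1}) \<xi> \<partial>PI)
      * (\<integral>x. indicator A x * (\<Prod>l\<in>S \<inter> {max (c m) 1..m}. p x (y l)) \<partial>J)"
proof -
  define s where "s = max (c m) 1"
  define S1 where "S1 = S \<inter> {1..<s}"
  define S2 where "S2 = S \<inter> {s..m}"
  have cm: "c m \<le> m" using cons_le[OF c] m by auto
  have s: "s \<in> {1..n}" "s \<le> m" using cm m by (auto simp: s_def)
  have fS: "finite S" using S finite_subset by blast
  have SU: "S = S1 \<union> S2" "S1 \<inter> S2 = {}" using S by (auto simp: S1_def S2_def)
  define G where "G = PP c S1"
  define H where "H = (\<lambda>x. indicator A x * (\<Prod>l\<in>S2. p x (y l)))"
  have PS2: "PP c S2 \<xi> = (\<Prod>l\<in>S2. p (\<xi> s) (y l))" for \<xi>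
    unfolding PP_def
  proof (rule prod.cong)
    fix l assume "l \<in> S2"
    then have "l \<in> {max (c m) 1..m}" by (auto simp: S2_def s_def)
    then have "c l = c m" by (rule seg_const[OF c m(2)])
    then show "p (\<xi> (max (c l) 1)) (y l) = p (\<xi> s) (y l)" by (simp add: s_def)
  qed simp
  have eq: "indicator A (\<xi> s) * PP c S \<xi> = G \<xi> * H (\<xi> s)" for \<xi>
  proof -
    have f12: "finite S1" "finite S2" using fS by (auto simp: S1_def S2_def)
    have "PP c S \<xi> = PP c (S1 \<union> S2) \<xi>" using SU(1) by simp
    also have "\<dots> = PP c S1 \<xi> * PP c S2 \<xi>"
      unfolding PP_def by (rule prod.union_disjoint) (use f12 SU(2) in auto)
    finally have "PP c S \<xi> = PP c S1 \<xi> * PP c S2 \<xi>" .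
    then show ?thesis by (simp add: G_def H_def PS2)
  qed
  have Gnn: "0 \<le> G \<xi>" for \<xi> by (simp add: G_def PP_nonneg)
  have Hnn: "0 \<le> H x" for x by (simp add: H_def prod_nonneg pnn)
  have S1i: "\<forall>l\<in>S1. max (c l) 1 \<in> {1..n} - {s}"
  proof
    fix l assume l: "l \<in> S1"
    then have "l \<in> {1..n}" "l < s" using S s by (auto simp: S1_def)
    then have "c l \<le> l" using cons_le[OF c] by auto
    then show "max (c l) 1 \<in> {1..n} - {s}" using \<open>l < s\<close> \<open>l \<in> {1..n}\<close> by auto
  qed
  have Gm1: "G \<in> borel_measurable PI" unfolding G_def by (rule PP_meas) (use S1i in auto)
  have Gm2: "G \<in> borel_measurable (PiM ({1..n} - {s}) (\<lambda>_. J))" unfolding G_def by (rule PP_meas[OF S1i])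
  have Hm: "H \<in> borel_measurable J" unfolding H_def using A pm by measurable
  have Hc: "(\<lambda>\<xi>. H (\<xi> s)) \<in> borel_measurable PI"
    by (rule measurable_compose[OF measurable_component_singleton[of s "{1..n}" "\<lambda>_. J"] Hm]) (use s in simp)
  have inv: "G (\<xi>(s := v)) = G \<xi>" for \<xi> v
    unfolding G_def PP_def
  proof (rule prod.cong)
    fix l assume "l \<in> S1" then have "max (c l) 1 \<noteq> s" using S1i by auto
    then show "p ((\<xi>(s := v)) (max (c l) 1)) (y l) = p (\<xi> (max (c l) 1)) (y l)" by simp
  qed simp
  have "(\<integral>\<xi>. indicator A (\<xi> s) * PP c S \<xi> \<partial>PI) = (\<integral>\<xi>. G \<xi> * H (\<xi> s) \<partial>PI)"
    by (simp add: eq)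
  also have "\<dots> = enn2real (\<integral>\<^sup>+\<xi>. ennreal (G \<xi> * H (\<xi> s)) \<partial>PI)"
    by (rule integral_eq_nn_integral) (use Gm1 Hc Gnn Hnn in auto)
  also have "\<dots> = enn2real (\<integral>\<^sup>+\<xi>. ennreal (G \<xi>) * ennreal (H (\<xi> s)) \<partial>PI)"
    by (simp add: ennreal_mult Gnn Hnn)
  also have "\<dots> = enn2real ((\<integral>\<^sup>+\<xi>. ennreal (G \<xi>) \<partial>PI) * (\<integral>\<^sup>+x. ennreal (H x) \<partial>J))"
    by (subst nnprod[OF s(1)]) (use Gm1 Gm2 Hm inv in auto)
  also have "\<dots> = enn2real (\<integral>\<^sup>+\<xi>. ennreal (G \<xi>) \<partial>PI) * enn2real (\<integral>\<^sup>+x. ennreal (H x) \<partial>J)"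
    by (rule enn2real_mult)
  also have "\<dots> = (\<integral>\<xi>. G \<xi> \<partial>PI) * (\<integral>x. H x \<partial>J)"
    by (subst (1 2) integral_eq_nn_integral) (use Gm1 Hm Gnn Hnn in auto)
  finally show ?thesis by (simp add: s_def G_def H_def S1_def S2_def)
qed


lemma int1: "(\<integral>\<xi>. PP c {} \<xi> \<partial>PI) = 1"
proof -
  interpret P: prob_space PI by (rule prob_space_PiM) (use PJ in auto)
  show ?thesis using P.emeasure_space_1 by (simp add: PP_def measure_def)
qed

lemma UNIV_sets: "UNIV \<in> sets J"
  using sets.top[of J] spJ by simp

lemma pos_PP: "cons c \<Longrightarrow> m \<le> n \<Longrightarrow> 0 < (\<integral>\<xi>. PP c {1..m} \<xi> \<partial>PI)"
proof (induction m rule: less_induct)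
  case (less m)
  show ?case
  proof (cases "m = 0")
    case True then show ?thesis using int1 by simp
  next
    case False
    define s where "s = max (c m) 1"
    have cm: "c m \<le> m" using cons_le[OF less.prems(1)] False less.prems by auto
    have s: "1 \<le> s" "s \<le> m" using cm False by (auto simp: s_def)
    have e1: "{1..m} \<inter> {1..<s} = {1..s - 1}" using s by auto
    have e2: "{1..m} \<inter> {s..m} = {s..m}" using s by auto
    have "(\<integral>\<xi>. PP c {1..m} \<xi> \<partial>PI) = (\<integral>\<xi>. indicator UNIV (\<xi> (max (c m) 1)) * PP c {1..m} \<xi> \<partial>PI)"
      by simp
    also have "\<dots> = (\<integral>\<xi>. PP c ({1..m} \<inter> {1..<s}) \<xi> \<partial>PI)
      * (\<integral>x. indicator UNIV x * (\<Prod>l\<in>{1..m} \<inter> {s..m}. p x (y l)) \<partial>J)"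
      unfolding s_def by (rule fact) (use less.prems False UNIV_sets in auto)
    also have "\<dots> = (\<integral>\<xi>. PP c {1..s - 1} \<xi> \<partial>PI) * (\<integral>x. (\<Prod>l\<in>{s..m}. p x (y l)) \<partial>J)"
      unfolding e1 e2 by simp
    finally have eq: "(\<integral>\<xi>. PP c {1..m} \<xi> \<partial>PI) = (\<integral>\<xi>. PP c {1..s - 1} \<xi> \<partial>PI) * (\<integral>x. (\<Prod>l\<in>{s..m}. p x (y l)) \<partial>J)" .
    have "0 < (\<integral>\<xi>. PP c {1..s - 1} \<xi> \<partial>PI)"
      using less.IH[of "s - 1"] s less.prems by auto
    moreover have "0 < (\<integral>x. (\<Prod>l\<in>{s..m}. p x (y l)) \<partial>J)"
      using ipos s less.prems by auto
    ultimately show ?thesis unfolding eq by simp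
  qed
qed

lemma jd:
  assumes i: "1 \<le> i" "i \<le> n" and S: "S \<subseteq> {1..i}" and A: "A \<in> sets J"
  shows "joint_dens n q J p y S i j A =
    (\<Sum>c\<in>cp_paths n. if c i = j then path_prob n q c * (\<integral>\<xi>. PP c (S \<inter> {1..<max j 1}) \<xi> \<partial>PI) else 0)
    * (\<integral>x. indicator A x * (\<Prod>l\<in>S \<inter> {max j 1..i}. p x (y l)) \<partial>J)"
  unfolding joint_dens_def sum_distrib_right
proof (rule sum.cong[OF refl])
  fix c
  show "path_prob n q c * (\<integral>\<xi>. (if c i = j \<and> seg_val c \<xi> i \<in> A
               then (\<Prod>l\<in>S. p (seg_val c \<xi> l) (y l)) else 0) \<partial>PI)
    = (if c i = j then path_prob n q c * (\<integral>\<xi>. PP c (S \<inter> {1..<max j 1}) \<xi> \<partial>PI) else 0)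
    * (\<integral>x. indicator A x * (\<Prod>l\<in>S \<inter> {max j 1..i}. p x (y l)) \<partial>J)"
  proof (cases "path_prob n q c = 0")
    case True then show ?thesis by simp
  next
    case False
    then have c: "cons c" by (rule path_cons)
    show ?thesis
    proof (cases "c i = j")
      case False then show ?thesis by simp
    next
      case True
      have eq: "(if c i = j \<and> seg_val c \<xi> i \<in> A then (\<Prod>l\<in>S. p (seg_val c \<xi> l) (y l)) else 0)
        = indicator A (\<xi> (max (c i) 1)) * PP c S \<xi>" for \<xi>
      proof -
        have "seg_val c \<xi> i = \<xi> (max (c i) 1)" using seg_closed[OF c] i by auto
        moreover have "(\<Prod>l\<in>S. p (seg_val c \<xi> l) (y l)) = PP c S \<xi>"
          unfolding PP_def
        proof (rule prod.cong[OF refl])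
          fix l assume "l \<in> S"
          then have "l \<in> {1..n}" using S i by auto
          then show "p (seg_val c \<xi> l) (y l) = p (\<xi> (max (c l) 1)) (y l)" using seg_closed[OF c, of l \<xi>] by simp
        qed
        ultimately show ?thesis using True by (simp add: indicator_def)
      qed
      have "(\<integral>\<xi>. indicator A (\<xi> (max (c i) 1)) * PP c S \<xi> \<partial>PI)
        = (\<integral>\<xi>. PP c (S \<inter> {1..<max (c i) 1}) \<xi> \<partial>PI)
          * (\<integral>x. indicator A x * (\<Prod>l\<in>S \<inter> {max (c i) 1..i}. p x (y l)) \<partial>J)"
        by (rule fact[OF c i S A])
      moreover have "(\<lambda>\<xi>. if c i = j \<and> seg_val c \<xi> i \<in> A then (\<Prod>l\<in>S. p (seg_val c \<xi> l) (y l)) else 0)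
        = (\<lambda>\<xi>. indicator A (\<xi> (max (c i) 1)) * PP c S \<xi>)" by (intro ext eq)
      ultimately show ?thesis using True by simp
    qed
  qed
qed

lemma jd_simple:
  assumes i: "1 \<le> i" "i \<le> n" and S: "S \<subseteq> {max j 1..i}"
  shows "joint_dens n q J p y S i j UNIV = prob_C n q i j * (\<integral>x. (\<Prod>l\<in>S. p x (y l)) \<partial>J)"
proof -
  have e1: "S \<inter> {1..<max j 1} = {}"
  proof -
    { fix x assume "x \<in> S" then have "max j 1 \<le> x" using S by auto
      then have "x \<notin> {1..<max j 1}" by (simp add: max_def split: if_splits) }
    then show ?thesis by blast
  qed
  have e2: "S \<inter> {max j 1..i} = S" using S by auto
  have S': "S \<subseteq> {1..i}" using S by auto
  show ?thesis
  proof -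
    have "(\<Sum>c\<in>cp_paths n. if c i = j then path_prob n q c * (\<integral>\<xi>. PP c {} \<xi> \<partial>PI) else 0) = prob_C n q i j"
      unfolding prob_C_def by (rule sum.cong) (use int1 in auto)
    then show ?thesis unfolding jd[OF i S' UNIV_sets] e1 e2 by simp
  qed
qed

end

theorem mainTheorem3:
  fixes n :: nat and q :: "nat \<Rightarrow> nat \<Rightarrow> real"
    and J :: "'x::polish_space measure" and \<psi> :: "'y::polish_space measure"
    and p :: "'x \<Rightarrow> 'y \<Rightarrow> real" and y :: "nat \<Rightarrow> 'y"
  assumes "n \<ge> 1"
    and "prob_space J" and "sets J = sets borel"
    and "sigma_finite_measure \<psi>" and "sets \<psi> = sets borel"
    and "\<forall>j i. j < i \<and> i \<le> n \<longrightarrow> 0 \<le> q j i \<and> q j i \<le> 1"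
    and "(\<lambda>(x, v). p x v) \<in> borel_measurable (J \<Otimes>\<^sub>M \<psi>)"
    and "\<forall>x v. 0 \<le> p x v"
    and "\<forall>x\<in>space J. (\<integral>\<^sup>+ v. ennreal (p x v) \<partial>\<psi>) = 1"
    and "\<forall>j i. 0 < j \<and> j \<le> i \<and> i \<le> n \<longrightarrow> (\<integral>x. (\<Prod>l\<in>{j..i}. p x (y l)) \<partial>J) > 0"
  shows "(\<forall>j i. 0 < j \<and> j \<le> i \<and> i \<le> n \<and> prob_C n q i j > 0 \<longrightarrow>
            o_fun n q J p y j i =
              (\<integral>x. (\<Prod>l\<in>{j..i}. p x (y l)) \<partial>J) / (\<integral>x. (\<Prod>l\<in>{j..<i}. p x (y l)) \<partial>J)
          \<and> H_fun n q J p y j i =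
              density J (\<lambda>x. ennreal ((\<Prod>l\<in>{j..i}. p x (y l)) /
                                       (\<integral>x'. (\<Prod>l\<in>{j..i}. p x' (y l)) \<partial>J))))
       \<and> (\<forall>i. 0 < i \<and> i \<le> n \<and> prob_C n q i 0 > 0 \<and> prob_C n q i 1 > 0 \<longrightarrow>
            o_fun n q J p y 0 i = o_fun n q J p y 1 i)"
proof -
  have spsi: "space \<psi> = UNIV" using sets_eq_imp_space_eq[OF assms(5)] by simp
  have pm: "(\<lambda>x. p x v) \<in> borel_measurable J" for v
  proof -
    have "(\<lambda>x. (x, v)) \<in> measurable J (J \<Otimes>\<^sub>M \<psi>)" by (rule measurable_Pair2') (simp add: spsi)
    from measurable_compose[OF this assms(7)] show ?thesis by simp
  qed
  interpret cpm n q J p y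
    by (rule cpm.intro[where n=n and q=q and J=J and p=p and y=y, OF assms(1,2,3,6) pm _ assms(10)]) (use assms(8) in blast)
  show ?thesis
  proof (intro conjI allI impI)
    fix j i assume a: "0 < j \<and> j \<le> i \<and> i \<le> n \<and> prob_C n q i j > 0"
    have i: "1 \<le> i" "i \<le> n" using a by auto
    have mj: "max j 1 = j" using a by auto
    define f where "f = (\<lambda>x. \<Prod>l\<in>{j..i}. p x (y l))"
    define Z where "Z = (\<integral>x. f x \<partial>J)"
    have Zpos: "0 < Z" unfolding Z_def f_def using ipos a by auto
    have fint: "integrable J f"
    proof (rule ccontr)
      assume "\<not> integrable J f"
      then have "Z = 0" unfolding Z_def by (rule not_integrable_integral_eq)
      then show False using Zpos by simp
    qed
    have fnn: "0 \<le> f x" for x unfolding f_def by (intro prod_nonneg) (auto intro: pnn)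
    have fm: "f \<in> borel_measurable J" unfolding f_def by (intro borel_measurable_prod pm)
    have Pne: "prob_C n q i j \<noteq> 0" using a by simp
    show "o_fun n q J p y j i =
              (\<integral>x. (\<Prod>l\<in>{j..i}. p x (y l)) \<partial>J) / (\<integral>x. (\<Prod>l\<in>{j..<i}. p x (y l)) \<partial>J)"
    proof -
      have "{j..i} \<subseteq> {max j 1..i}" "{j..<i} \<subseteq> {max j 1..i}" using mj by auto
      note e = jd_simple[OF i this(1)] jd_simple[OF i this(2)]
      show ?thesis unfolding o_fun_def mj using e Pne by (simp add: mj)
    qed
    obtain c0 where c0: "c0 \<in> cp_paths n" "c0 i = j" "path_prob n q c0 \<noteq> 0"
    proof (rule ccontr)
      assume "\<not> thesis"
      then have "\<forall>c\<in>cp_paths n. (if c i = j then path_prob n q c else 0) = 0" using that by auto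
      then have "prob_C n q i j = 0" unfolding prob_C_def by (intro sum.neutral) 
      then show False using Pne by simp
    qed
    define K where "K = (\<Sum>c\<in>cp_paths n. if c i = j then path_prob n q c * (\<integral>\<xi>. PP c ({1..i} \<inter> {1..<max j 1}) \<xi> \<partial>PI) else 0)"
    have e1: "{1..i} \<inter> {1..<max j 1} = {1..j - 1}" using a by auto
    have e2: "{1..i} \<inter> {max j 1..i} = {j..i}" using a by auto
    have Kpos: "0 < K" unfolding K_def
    proof (rule sum_pos2)
      show "finite (cp_paths n)" by (simp add: cp_paths_def finite_PiE)
      show "c0 \<in> cp_paths n" by (rule c0)
      have "0 < path_prob n q c0" using c0(3) path_nonneg[of c0] by simp
      moreover have "0 < (\<integral>\<xi>. PP c0 {1..j - 1} \<xi> \<partial>PI)"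
        by (rule pos_PP) (use path_cons[OF c0(3)] a in auto)
      ultimately show "0 < (if c0 i = j then path_prob n q c0 * (\<integral>\<xi>. PP c0 ({1..i} \<inter> {1..<max j 1}) \<xi> \<partial>PI) else 0)"
        using c0(2) e1 by simp
    next
      fix c assume "c \<in> cp_paths n"
      show "0 \<le> (if c i = j then path_prob n q c * (\<integral>\<xi>. PP c ({1..i} \<inter> {1..<max j 1}) \<xi> \<partial>PI) else 0)"
        using path_nonneg[of c] by (simp add: PP_nonneg)
    qed
    have jdA: "joint_dens n q J p y {1..i} i j A = K * (\<integral>x. indicator A x * f x \<partial>J)" if "A \<in> sets J" for A
    proof -
      have "joint_dens n q J p y {1..i} i j A = K * (\<integral>x. indicator A x * (\<Prod>l\<in>{1..i} \<inter> {max j 1..i}. p x (y l)) \<partial>J)"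
        unfolding K_def by (rule jd[OF i _ that]) simp
      then show ?thesis unfolding e2 f_def .
    qed
    have jdU: "joint_dens n q J p y {1..i} i j UNIV = K * Z"
      using jdA[OF UNIV_sets] by (simp add: Z_def)
    define D where "D = density J (\<lambda>x. ennreal (f x / Z))"
    have emD: "emeasure D A = ennreal ((\<integral>x. indicator A x * f x \<partial>J) / Z)" if A: "A \<in> sets J" for A
    proof -
      have "emeasure D A = (\<integral>\<^sup>+x. ennreal (f x / Z) * indicator A x \<partial>J)"
        unfolding D_def by (rule emeasure_density) (use fm A in auto)
      also have "\<dots> = (\<integral>\<^sup>+x. ennreal (indicator A x * f x / Z) \<partial>J)"
        by (rule nn_integral_cong) (simp add: indicator_def)
      also have "\<dots> = ennreal (\<integral>x. indicator A x * f x / Z \<partial>J)"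
      proof (rule nn_integral_eq_integral)
        have "integrable J (\<lambda>x. indicator A x *\<^sub>R f x)" by (rule integrable_mult_indicator[OF A fint])
        then show "integrable J (\<lambda>x. indicator A x * f x / Z)" by simp
        show "AE x in J. 0 \<le> indicator A x * f x / Z" using fnn Zpos by simp
      qed
      also have "\<dots> = ennreal ((\<integral>x. indicator A x * f x \<partial>J) / Z)" by simp
      finally show ?thesis .
    qed
    have "H_fun n q J p y j i = measure_of (space J) (sets J) (emeasure D)"
      unfolding H_fun_def
    proof (rule measure_of_eq)
      show "sets J \<subseteq> Pow (space J)" by (rule sets.space_closed)
      fix A assume "A \<in> sigma_sets (space J) (sets J)"
      then have A: "A \<in> sets J" by (simp add: sets.sigma_sets_eq)
      show "ennreal (joint_dens n q J p y {1..i} i j A / joint_dens n q J p y {1..i} i j UNIV) = emeasure D A"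
        unfolding emD[OF A] jdA[OF A] jdU using Kpos by simp
    qed
    also have "\<dots> = D"
      using measure_of_of_measure[of D] unfolding D_def by simp
    finally show "H_fun n q J p y j i =
              density J (\<lambda>x. ennreal ((\<Prod>l\<in>{j..i}. p x (y l)) /
                                       (\<integral>x'. (\<Prod>l\<in>{j..i}. p x' (y l)) \<partial>J)))"
      by (simp add: D_def Z_def f_def)
  next
    fix i assume a: "0 < i \<and> i \<le> n \<and> prob_C n q i 0 > 0 \<and> prob_C n q i 1 > 0"
    have i: "1 \<le> i" "i \<le> n" using a by auto
    have s: "{1..i} \<subseteq> {max j 1..i}" "{1..<i} \<subseteq> {max j 1..i}" if "j \<le> 1" for j :: nat
      using that by auto
    have "o_fun n q J p y 0 i = (\<integral>x. (\<Prod>l\<in>{1..i}. p x (y l)) \<partial>J) / (\<integral>x. (\<Prod>l\<in>{1..<i}. p x (y l)) \<partial>J)"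
      unfolding o_fun_def using jd_simple[OF i s(1)[of 0]] jd_simple[OF i s(2)[of 0]] a by simp
    moreover have "o_fun n q J p y 1 i = (\<integral>x. (\<Prod>l\<in>{1..i}. p x (y l)) \<partial>J) / (\<integral>x. (\<Prod>l\<in>{1..<i}. p x (y l)) \<partial>J)"
      unfolding o_fun_def using jd_simple[OF i s(1)[of 1]] jd_simple[OF i s(2)[of 1]] a by simp
    ultimately show "o_fun n q J p y 0 i = o_fun n q J p y 1 i" by simp
  qed
qed

end
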